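(* Consider the adaptive sieving procedure described in the context. For each $i\in\{1,\dots,N\}$, the inner loop for $C_i$ terminates after finitely many iterations: there exists an integer $\bar{k}$ with $0\le\bar{k}\le n$ such that $\mathcal{J}^{\bar{k}}(C_i)=\emptyset$. Moreover, the output tuple $(\overline{W}(C_i),\overline{b}(C_i),\overline{v}(C_i),\overline{U}(C_i),\overline{\lambda}(C_i),\overline{\Lambda}(C_i))$ is a KKT tuple of the perturbed full problem $$\min_{W,b,v,U}\ \tfrac12\|W\|_F^2+\tau\|U\|_*+\delta^*_{S^i}(v)-\langle\delta_W,W\rangle-b\delta_b-\langle\delta_v,v\rangle-\langle\delta_U,U\rangle\quad\text{s.t.}\quad \mathcal{A}W+by+v-e_n=\delta_\lambda,\ W-U=\delta_\Lambda$$ for some error $(\delta_W,\delta_b,\delta_v,\delta_U,\delta_\lambda,\delta_\Lambda)$ with $\max(\|\delta_W\|,|\delta_b|,\|\delta_v\|,\|\delta_U\|,\|\delta_\lambda\|,\|\delta_\Lambda\|)\le\varepsilon$; that is, $\delta_W=\overline{W}+\mathcal{A}^*\overline{\lambda}+\overline{\Lambda}$, $\delta_b=y^\top\overline{\lambda}$, $\delta_v-\overline{\lambda}\in\partial\delta^*_{S^i}(\overline{v})$, $\delta_U+\overline{\Lambda}\in\partial(\tau\|\cdot\|_* )(\overline{U})$, $\delta_\lambda=\mathcal{A}\overline{W}+\overline{b}y+\overline{v}-e_n$, $\delta_\Lambda=\overline{W}-\overline{U}$ (all barred quantities evaluated at $C_i$).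
   Context: Data: $X_1,\dots,X_n\in\mathbb{R}^{p\times q}$, $y=(y_1,\dots,y_n)^\top\in\{-1,+1\}^n$, $\tau>0$, $e_n$ the all-ones vector, $\|\cdot\|_*$ the nuclear norm, $\langle X,Y\rangle=\operatorname{tr}(X^\top Y)$. $\mathcal{A}W=(\langle y_1X_1,W\rangle,\dots,\langle y_nX_n,W\rangle)^\top$, $\mathcal{A}^*z=\sum_j z_jy_jX_j$; for $\mathcal{I}\subseteq[n]:=\{1,\dots,n\}$, $\mathcal{A}_{\mathcal{I}}W:=(\mathcal{A}W)_{\mathcal{I}}$, $\mathcal{A}^*_{\mathcal{I}}z:=\sum_{j\in\mathcal{I}}z_jy_jX_j$, and $y_{\mathcal{I}},(e_n)_{\mathcal{I}}$ are subvectors. For grid values $0<C_0<C_1<\dots<C_N$, let $S^i=[0,C_i]^n$, $S^i_{\mathcal{I}}=[0,C_i]^{|\mathcal{I}|}$, and $\delta^*_K$ the support function of $K$. Reduced perturbed problem for $\mathcal{I}$ and $C_i$: minimize $\frac12\|W\|_F^2+\tau\|U\|_*+\delta^*_{S^i_{\mathcal{I}}}(v_{\mathcal{I}})-\langle\delta_W,W\rangle-b\delta_b-\langle\delta_{v_\mathcal{I}},v_{\mathcal{I}}\rangle-\langle\delta_U,U\rangle$ subject to $\mathcal{A}_{\mathcal{I}}W+by_{\mathcal{I}}+v_{\mathcal{I}}-(e_n)_{\mathcal{I}}=\delta_{\lambda_\mathcal{I}}$, $W-U=\delta_\Lambda$. A tuple $(W,b,v_{\mathcal{I}},U,\lambda_{\mathcal{I}},\Lambda)$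 is a KKT tuple of it if $\delta_W=W+\mathcal{A}^*_{\mathcal{I}}\lambda_{\mathcal{I}}+\Lambda$, $\delta_b=y_{\mathcal{I}}^\top\lambda_{\mathcal{I}}$, $\delta_{v_\mathcal{I}}-\lambda_{\mathcal{I}}\in\partial\delta^*_{S^i_{\mathcal{I}}}(v_{\mathcal{I}})$, $\delta_U+\Lambda\in\partial(\tau\|\cdot\|_* )(U)$, $\delta_{\lambda_\mathcal{I}}=\mathcal{A}_{\mathcal{I}}W+by_{\mathcal{I}}+v_{\mathcal{I}}-(e_n)_{\mathcal{I}}$, $\delta_\Lambda=W-U$. Procedure (AS strategy): given an initial $(\overline{W}(C_0),\overline{b}(C_0))$, a tolerance $\varepsilon\ge0$, a scalar $\widehat{\varepsilon}\ge0$ and a positive integer $d_{\max}$, set $\mathcal{I}^*(C_0)=\{j: y_j(\langle\overline{W}(C_0),X_j\rangle+\overline{b}(C_0))\le1+\widehat{\varepsilon}\}$. For $i=1,\dots,N$, set $\mathcal{I}^0(C_i)=\mathcal{I}^*(C_{i-1})$, $k=0$, and repeat: Step 1: find a KKT tuple $(W^k,b^k,v^k_{\mathcal{I}},U^k,\lambda^k_{\mathcal{I}},\Lambda^k)$ of the reduced perturbed problem with $\mathcal{I}=\mathcal{I}^k(C_i)$ for some errors all of norm at most $\varepsilon$. Step 2: with $\overline{\mathcal{I}}^k=[n]\setminus\mathcal{I}^k(C_i)$, set $v^k_j=1-y_j(\langle W^k,X_j\rangle+b^k)$ for $j\in\overline{\mathcal{I}}^k$ and $\mathcal{J}^k(C_i)=\{j\in\overline{\mathcal{I}}^k: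 v^k_j\ge0\}$; extend $v^k_{\mathcal{I}}$ to $v^k\in\mathbb{R}^n$ by these values, and $\lambda^k_{\mathcal{I}}$ to $\lambda^k\in\mathbb{R}^n$ by $\lambda^k_j=-C_i$ for $j\in\mathcal{J}^k(C_i)$ and $\lambda^k_j=0$ for other $j\in\overline{\mathcal{I}}^k$. Step 3: if $\mathcal{J}^k(C_i)=\emptyset$, output $(\overline{W}(C_i),\overline{b}(C_i),\overline{v}(C_i),\overline{U}(C_i),\overline{\lambda}(C_i),\overline{\Lambda}(C_i))=(W^k,b^k,v^k,U^k,\lambda^k,\Lambda^k)$, set $\mathcal{I}^*(C_i)=\{j: y_j(\langle\overline{W}(C_i),X_j\rangle+\overline{b}(C_i))\le1+\widehat{\varepsilon}\}$ and move to $i+1$; otherwise choose a positive integer $d\le\min\{|\mathcal{J}^k(C_i)|,d_{\max}\}$, let $\widehat{\mathcal{J}}^{k+1}(C_i)$ be the indices $j\in\mathcal{J}^k(C_i)$ of the $d$ largest values among $\{v^k_t\}_{t\in\mathcal{J}^k(C_i)}$, set $\mathcal{I}^{k+1}(C_i)=\mathcal{I}^k(C_i)\cup\widehat{\mathcal{J}}^{k+1}(C_i)$, $k\leftarrow k+1$, and return to Step 1. *)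

theory Defs
  imports "HOL-Analysis.Analysis"
begin

text \<open>Matrices in R^{p x q} are elements of real^'q^'p. The HOL-Analysis inner product
on this type is sum of entrywise products = tr(X^T Y), and the norm is the Frobenius norm.
Vectors in R^n are real^'n with n = CARD('n); [n] = UNIV.
A reduced vector in R^I is represented by its zero extension, i.e. an element of
the coordinate subspace coord_sub I (isometric copy of R^{|I|}).\<close>

definition spec_norm :: "real^'q^'p \<Rightarrow> real" where
  "spec_norm Y = onorm (\<lambda>x. Y *v x)"

definition nuc_norm :: "real^'q^'p \<Rightarrow> real" where
  "nuc_norm X = Sup {X \<bullet> Y | Y. spec_norm Y \<le> 1}"

definition subdiff_in :: "'a::real_inner set \<Rightarrow> ('a \<Rightarrow> real) \<Rightarrow> 'a \<Rightarrow> 'a set" where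
  "subdiff_in V f x = {g \<in> V. \<forall>z\<in>V. f z \<ge> f x + g \<bullet> (z - x)}"

definition subdiff :: "('a::real_inner \<Rightarrow> real) \<Rightarrow> 'a \<Rightarrow> 'a set" where
  "subdiff f x = subdiff_in UNIV f x"

definition support_fun :: "'a::real_inner set \<Rightarrow> 'a \<Rightarrow> real" where
  "support_fun K v = Sup ((\<lambda>u. u \<bullet> v) ` K)"

definition coord_sub :: "'n::finite set \<Rightarrow> (real^'n) set" where
  "coord_sub I = {v. \<forall>j. j \<notin> I \<longrightarrow> v$j = 0}"

definition restr :: "'n::finite set \<Rightarrow> real^'n \<Rightarrow> real^'n" where
  "restr I v = (\<chi> j. if j \<in> I then v$j else 0)"

text \<open>S^i_I = [0,C]^{|I|}, embedded in coord_sub I; Sbox UNIV C = S^i = [0,C]^n.\<close>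
definition Sbox :: "'n::finite set \<Rightarrow> real \<Rightarrow> (real^'n) set" where
  "Sbox I C = {u. \<forall>j. (j \<in> I \<longrightarrow> 0 \<le> u$j \<and> u$j \<le> C) \<and> (j \<notin> I \<longrightarrow> u$j = 0)}"

definition opA :: "('n::finite \<Rightarrow> real^'q^'p) \<Rightarrow> real^'n \<Rightarrow> 'n set \<Rightarrow> real^'q^'p \<Rightarrow> real^'n" where
  "opA X y I W = (\<chi> j. if j \<in> I then (y$j *\<^sub>R X j) \<bullet> W else 0)"

definition adjA :: "('n::finite \<Rightarrow> real^'q^'p) \<Rightarrow> real^'n \<Rightarrow> 'n set \<Rightarrow> real^'n \<Rightarrow> real^'q^'p" where
  "adjA X y I z = (\<Sum>j\<in>I. (z$j * y$j) *\<^sub>R X j)"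

definition ones :: "real^'n::finite" where
  "ones = (\<chi> j. 1)"

definition red_KKT ::
  "('n::finite \<Rightarrow> real^'q^'p) \<Rightarrow> real^'n \<Rightarrow> real \<Rightarrow> 'n set \<Rightarrow> real \<Rightarrow>
   real^'q^'p \<Rightarrow> real \<Rightarrow> real^'n \<Rightarrow> real^'q^'p \<Rightarrow> real^'n \<Rightarrow> real^'q^'p \<Rightarrow>
   real^'q^'p \<Rightarrow> real \<Rightarrow> real^'n \<Rightarrow> real^'q^'p \<Rightarrow> real^'n \<Rightarrow> real^'q^'p \<Rightarrow> bool" where
  "red_KKT X y tau I C W b v U lam Lam dW db dv dU dlam dLam \<longleftrightarrow>
     v \<in> coord_sub I \<and> lam \<in> coord_sub I \<and> dv \<in> coord_sub I \<and> dlam \<in> coord_sub I \<and>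
     dW = W + adjA X y I lam + Lam \<and>
     db = restr I y \<bullet> lam \<and>
     dv - lam \<in> subdiff_in (coord_sub I) (support_fun (Sbox I C)) v \<and>
     dU + Lam \<in> subdiff (\<lambda>Z. tau * nuc_norm Z) U \<and>
     dlam = opA X y I W + b *\<^sub>R restr I y + v - restr I ones \<and>
     dLam = W - U"

definition full_KKT ::
  "('n::finite \<Rightarrow> real^'q^'p) \<Rightarrow> real^'n \<Rightarrow> real \<Rightarrow> real \<Rightarrow>
   real^'q^'p \<Rightarrow> real \<Rightarrow> real^'n \<Rightarrow> real^'q^'p \<Rightarrow> real^'n \<Rightarrow> real^'q^'p \<Rightarrow>
   real^'q^'p \<Rightarrow> real \<Rightarrow> real^'n \<Rightarrow> real^'q^'p \<Rightarrow> real^'n \<Rightarrow> real^'q^'p \<Rightarrow> bool" where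
  "full_KKT X y tau C W b v U lam Lam dW db dv dU dlam dLam \<longleftrightarrow>
     dW = W + adjA X y UNIV lam + Lam \<and>
     db = y \<bullet> lam \<and>
     dv - lam \<in> subdiff (support_fun (Sbox UNIV C)) v \<and>
     dU + Lam \<in> subdiff (\<lambda>Z. tau * nuc_norm Z) U \<and>
     dlam = opA X y UNIV W + b *\<^sub>R y + v - ones \<and>
     dLam = W - U"

definition err_bound ::
  "real \<Rightarrow> real^'q^'p \<Rightarrow> real \<Rightarrow> real^'n::finite \<Rightarrow> real^'q^'p \<Rightarrow> real^'n \<Rightarrow> real^'q^'p \<Rightarrow> bool" where
  "err_bound eps dW db dv dU dlam dLam \<longleftrightarrow>
     norm dW \<le> eps \<and> \<bar>db\<bar> \<le> eps \<and> norm dv \<le> eps \<and> norm dU \<le> eps \<and>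
     norm dlam \<le> eps \<and> norm dLam \<le> eps"

definition resid :: "('n::finite \<Rightarrow> real^'q^'p) \<Rightarrow> real^'n \<Rightarrow> real^'q^'p \<Rightarrow> real \<Rightarrow> 'n \<Rightarrow> real" where
  "resid X y W b j = 1 - y$j * (W \<bullet> X j + b)"

definition Jset :: "('n::finite \<Rightarrow> real^'q^'p) \<Rightarrow> real^'n \<Rightarrow> 'n set \<Rightarrow> real^'q^'p \<Rightarrow> real \<Rightarrow> 'n set" where
  "Jset X y I W b = {j. j \<notin> I \<and> resid X y W b j \<ge> 0}"

definition Ist :: "('n::finite \<Rightarrow> real^'q^'p) \<Rightarrow> real^'n \<Rightarrow> real \<Rightarrow> real^'q^'p \<Rightarrow> real \<Rightarrow> 'n set" where
  "Ist X y epsh W b = {j. y$j * (W \<bullet> X j + b) \<le> 1 + epsh}"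

definition ext_v :: "('n::finite \<Rightarrow> real^'q^'p) \<Rightarrow> real^'n \<Rightarrow> 'n set \<Rightarrow> real^'q^'p \<Rightarrow> real \<Rightarrow> real^'n \<Rightarrow> real^'n" where
  "ext_v X y I W b v = (\<chi> j. if j \<in> I then v$j else resid X y W b j)"

definition ext_lam :: "('n::finite \<Rightarrow> real^'q^'p) \<Rightarrow> real^'n \<Rightarrow> 'n set \<Rightarrow> real \<Rightarrow> real^'q^'p \<Rightarrow> real \<Rightarrow> real^'n \<Rightarrow> real^'n" where
  "ext_lam X y I C W b lam = (\<chi> j. if j \<in> I then lam$j else if j \<in> Jset X y I W b then - C else 0)"

end

theory Submission
  imports Defs
begin

lemma bdd_Sbox:
  assumes "C \<ge> 0" shows "bdd_above ((\<lambda>u. u \<bullet> z) ` Sbox I C)"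
proof (rule bdd_aboveI2)
  fix u assume u: "u \<in> Sbox I C"
  have "u \<bullet> z = (\<Sum>j\<in>UNIV. u$j * z$j)" by (simp add: inner_vec_def)
  also have "\<dots> \<le> (\<Sum>j\<in>UNIV. C * \<bar>z$j\<bar>)"
  proof (rule sum_mono)
    fix j
    have "0 \<le> u$j \<and> u$j \<le> C" using u assms unfolding Sbox_def by (cases "j \<in> I") auto
    then show "u$j * z$j \<le> C * \<bar>z$j\<bar>"
      by (smt (verit) abs_ge_self abs_mult abs_of_nonneg mult_right_mono mult_left_mono abs_ge_zero)
  qed
  finally show "u \<bullet> z \<le> (\<Sum>j\<in>UNIV. C * \<bar>z$j\<bar>)" .
qed

lemma full_from_red:
  fixes X :: "'n::finite \<Rightarrow> real^'q::finite^'p::finite" and I :: "'n set"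
  assumes R: "red_KKT X y tau I C W b v U lam Lam dW db dv dU dlam dLam"
    and J: "Jset X y I W b = {}" and C: "C \<ge> 0"
  shows "full_KKT X y tau C W b (ext_v X y I W b v) U (ext_lam X y I C W b lam) Lam dW db dv dU dlam dLam"
proof -
  let ?l = "ext_lam X y I C W b lam"
  let ?v = "ext_v X y I W b v"
  have neg: "resid X y W b j < 0" if "j \<notin> I" for j
    using J that unfolding Jset_def by (metis (mono_tags, lifting) empty_iff mem_Collect_eq not_le)
  have lout: "?l $ j = 0" if "j \<notin> I" for j using J that by (simp add: ext_lam_def)
  have lin: "?l $ j = lam $ j" if "j \<in> I" for j using that by (simp add: ext_lam_def)
  have cs: "v \<in> coord_sub I" "lam \<in> coord_sub I" "dv \<in> coord_sub I" "dlam \<in> coord_sub I"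
    using R unfolding red_KKT_def by auto
  have lam0: "lam $ j = 0" if "j \<notin> I" for j using cs that by (simp add: coord_sub_def)
  have dv0: "dv $ j = 0" if "j \<notin> I" for j using cs that by (simp add: coord_sub_def)
  have dlam0: "dlam $ j = 0" if "j \<notin> I" for j using cs that by (simp add: coord_sub_def)
  have v0: "v $ j = 0" if "j \<notin> I" for j using cs that by (simp add: coord_sub_def)
  have A: "adjA X y UNIV ?l = adjA X y I lam"
  proof -
    have "adjA X y UNIV ?l = (\<Sum>j\<in>I. (?l$j * y$j) *\<^sub>R X j)"
      unfolding adjA_def by (rule sum.mono_neutral_right) (auto simp: lout)
    also have "\<dots> = adjA X y I lam" unfolding adjA_def by (rule sum.cong) (auto simp: lin)
    finally show ?thesis .
  qed
  have B: "y \<bullet> ?l = restr I y \<bullet> lam"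
    unfolding inner_vec_def by (rule sum.cong) (auto simp: restr_def lin lout lam0)
  have D: "opA X y UNIV W + b *\<^sub>R y + ?v - ones = opA X y I W + b *\<^sub>R restr I y + v - restr I ones"
  proof -
    have "opA X y I W + b *\<^sub>R restr I y + v - restr I ones = dlam" using R unfolding red_KKT_def by auto
    then have e: "\<And>j. dlam $ j = (opA X y I W + b *\<^sub>R restr I y + v - restr I ones) $ j" by simp
    show ?thesis
    proof (rule vec_eq_iff[THEN iffD2, OF allI])
      fix j
      show "(opA X y UNIV W + b *\<^sub>R y + ?v - ones) $ j = (opA X y I W + b *\<^sub>R restr I y + v - restr I ones) $ j"
      proof (cases "j \<in> I")
        case True then show ?thesis by (simp add: opA_def ext_v_def restr_def ones_def)
      next
        case False
        then have "(opA X y I W + b *\<^sub>R restr I y + v - restr I ones) $ j = 0"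
          using e dlam0 by metis
        moreover have "(opA X y UNIV W + b *\<^sub>R y + ?v - ones) $ j = 0"
          using False by (simp add: opA_def ext_v_def ones_def resid_def inner_commute algebra_simps)
        ultimately show ?thesis by simp
      qed
    qed
  qed
  have G: "dv - ?l \<in> subdiff (support_fun (Sbox (UNIV::'n set) C)) ?v"
  proof -
    let ?g = "dv - ?l"
    have sd: "dv - lam \<in> subdiff_in (coord_sub I) (support_fun (Sbox I C)) v"
      using R unfolding red_KKT_def by auto
    have geq: "?g = dv - lam" by (simp add: vec_eq_iff) (metis lin lout lam0)
    have sub: "Sbox I C \<subseteq> Sbox (UNIV::'n set) C"
    proof
      fix u :: "real^'n" assume u: "u \<in> Sbox I C"
      have "0 \<le> u$j \<and> u$j \<le> C" for j using u C unfolding Sbox_def by (cases "j \<in> I") auto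
      then show "u \<in> Sbox (UNIV::'n set) C" unfolding Sbox_def by auto
    qed
    have z0: "0 \<in> Sbox I C" using C by (simp add: Sbox_def)
    then have ne: "Sbox I C \<noteq> {}" by blast
    have s1: "support_fun (Sbox (UNIV::'n set) C) ?v \<le> support_fun (Sbox I C) v"
      unfolding support_fun_def
    proof (rule cSUP_least)
      show "Sbox (UNIV::'n set) C \<noteq> {}" using ne sub by blast
      fix u :: "real^'n" assume u: "u \<in> Sbox (UNIV::'n set) C"
      have u01: "0 \<le> u$j \<and> u$j \<le> C" for j using u unfolding Sbox_def by simp
      have ru: "restr I u \<in> Sbox I C" using u01 C by (simp add: Sbox_def restr_def)
      have "u \<bullet> ?v \<le> restr I u \<bullet> v"
        unfolding inner_vec_def
      proof (rule sum_mono)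
        fix j
        show "u $ j \<bullet> ?v $ j \<le> restr I u $ j \<bullet> v $ j"
        proof (cases "j \<in> I")
          case True then show ?thesis by (simp add: ext_v_def restr_def)
        next
          case False
          have "0 \<le> u$j" using u01 by simp
          then show ?thesis using False neg[OF False] by (simp add: ext_v_def restr_def mult_nonneg_nonpos)
        qed
      qed
      also have "\<dots> \<le> (SUP u\<in>Sbox I C. u \<bullet> v)" by (rule cSUP_upper[OF ru bdd_Sbox[OF C]])
      finally show "u \<bullet> ?v \<le> (SUP u\<in>Sbox I C. u \<bullet> v)" .
    qed
    show ?thesis unfolding subdiff_def subdiff_in_def
    proof (intro CollectI conjI ballI UNIV_I)
      fix z :: "real^'n"
      have rz: "restr I z \<in> coord_sub I" by (simp add: restr_def coord_sub_def)
      have s2: "support_fun (Sbox I C) (restr I z) \<le> support_fun (Sbox (UNIV::'n set) C) z"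
        unfolding support_fun_def
      proof (rule cSUP_least[OF ne])
        fix u :: "real^'n" assume u: "u \<in> Sbox I C"
        have u0: "j \<notin> I \<Longrightarrow> u$j = 0" for j using u unfolding Sbox_def by simp
        have "u \<bullet> restr I z = u \<bullet> z" unfolding inner_vec_def
          by (rule sum.cong) (auto simp: restr_def u0)
        also have "\<dots> \<le> (SUP u\<in>Sbox (UNIV::'n set) C. u \<bullet> z)"
          by (rule cSUP_upper[OF _ bdd_Sbox[OF C]]) (use u sub in blast)
        finally show "u \<bullet> restr I z \<le> (SUP u\<in>Sbox (UNIV::'n set) C. u \<bullet> z)" .
      qed
      have s3: "support_fun (Sbox I C) (restr I z) \<ge> support_fun (Sbox I C) v + (dv - lam) \<bullet> (restr I z - v)"
      proof -
        have "\<forall>z\<in>coord_sub I. support_fun (Sbox I C) z \<ge> support_fun (Sbox I C) v + (dv - lam) \<bullet> (z - v)"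
          using sd unfolding subdiff_in_def by blast
        then show ?thesis using rz by blast
      qed
      have s4: "(dv - lam) \<bullet> (restr I z - v) = ?g \<bullet> (z - ?v)"
        unfolding geq inner_vec_def
        by (rule sum.cong) (auto simp: restr_def ext_v_def dv0 lam0)
      show "support_fun (Sbox (UNIV::'n set) C) z \<ge> support_fun (Sbox (UNIV::'n set) C) ?v + ?g \<bullet> (z - ?v)"
        using s1 s2 s3 s4 by linarith
    qed
  qed
  have R': "dW = W + adjA X y I lam + Lam" "db = restr I y \<bullet> lam"
    "dU + Lam \<in> subdiff (\<lambda>Z. tau * nuc_norm Z) U"
    "dlam = opA X y I W + b *\<^sub>R restr I y + v - restr I ones" "dLam = W - U"
    using R unfolding red_KKT_def by blast+
  show ?thesis unfolding full_KKT_def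
    by (intro conjI) (simp_all only: R' A B D G)
qed

theorem theorem3:
  fixes X :: "'n::finite \<Rightarrow> real^'q::finite^'p::finite" and y :: "real^'n"
    and tau eps epsh :: real and dmax N :: nat and C :: "nat \<Rightarrow> real"
    and W0 :: "real^'q^'p" and b0 :: real
    and I :: "nat \<Rightarrow> nat \<Rightarrow> 'n set" and Istar :: "nat \<Rightarrow> 'n set"
    and W U Lam :: "nat \<Rightarrow> nat \<Rightarrow> real^'q^'p" and b :: "nat \<Rightarrow> nat \<Rightarrow> real"
    and v lam :: "nat \<Rightarrow> nat \<Rightarrow> real^'n"
  assumes y_pm: "\<forall>j. y$j = 1 \<or> y$j = -1"
    and tau_pos: "tau > 0"
    and C0_pos: "0 < C 0"
    and C_incr: "\<forall>i<N. C i < C (Suc i)"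
    and eps_nonneg: "eps \<ge> 0"
    and epsh_nonneg: "epsh \<ge> 0"
    and dmax_pos: "dmax > 0"
    and Istar0: "Istar 0 = Ist X y epsh W0 b0"
    and init: "\<forall>i\<in>{1..N}. I i 0 = Istar (i - 1)"
    and step1: "\<forall>i\<in>{1..N}. \<forall>k.
        (\<forall>k'<k. Jset X y (I i k') (W i k') (b i k') \<noteq> {}) \<longrightarrow>
        (\<exists>dW db dv dU dlam dLam. err_bound eps dW db dv dU dlam dLam \<and>
           red_KKT X y tau (I i k) (C i) (W i k) (b i k) (v i k) (U i k) (lam i k) (Lam i k)
             dW db dv dU dlam dLam)"
    and step3: "\<forall>i\<in>{1..N}. \<forall>k.
        (\<forall>k'\<le>k. Jset X y (I i k') (W i k') (b i k') \<noteq> {}) \<longrightarrow>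
        (\<exists>d Jh. 0 < d \<and> d \<le> card (Jset X y (I i k) (W i k) (b i k)) \<and> d \<le> dmax \<and>
           Jh \<subseteq> Jset X y (I i k) (W i k) (b i k) \<and> card Jh = d \<and>
           (\<forall>j\<in>Jh. \<forall>t\<in>Jset X y (I i k) (W i k) (b i k) - Jh.
               resid X y (W i k) (b i k) t \<le> resid X y (W i k) (b i k) j) \<and>
           I i (Suc k) = I i k \<union> Jh)"
    and out_def: "\<forall>i\<in>{1..N}. \<forall>k.
        (\<forall>k'<k. Jset X y (I i k') (W i k') (b i k') \<noteq> {}) \<and>
        Jset X y (I i k) (W i k) (b i k) = {} \<longrightarrow>
        Istar i = Ist X y epsh (W i k) (b i k)"
  shows "\<forall>i\<in>{1..N}. \<exists>kb. kb \<le> CARD('n) \<and>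
           Jset X y (I i kb) (W i kb) (b i kb) = {} \<and>
           (\<forall>k<kb. Jset X y (I i k) (W i k) (b i k) \<noteq> {}) \<and>
           (\<exists>dW db dv dU dlam dLam. err_bound eps dW db dv dU dlam dLam \<and>
              full_KKT X y tau (C i) (W i kb) (b i kb)
                (ext_v X y (I i kb) (W i kb) (b i kb) (v i kb)) (U i kb)
                (ext_lam X y (I i kb) (C i) (W i kb) (b i kb) (lam i kb)) (Lam i kb)
                dW db dv dU dlam dLam)"
proof
  fix i assume i: "i \<in> {1..N}"
  have Cpos_all: "k \<le> N \<Longrightarrow> 0 < C k" for k
  proof (induction k)
    case 0 then show ?case using C0_pos by simp
  next
    case (Suc k)
    then have "0 < C k" "k < N" by auto
    then show ?case using C_incr by (meson less_trans)
  qed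
  have Cpos: "0 \<le> C i" using Cpos_all[of i] i by auto
  define J where "J k = Jset X y (I i k) (W i k) (b i k)" for k
  have disj: "J k \<inter> I i k = {}" for k unfolding J_def Jset_def by auto
  have grow: "(\<forall>k'<k. J k' \<noteq> {}) \<longrightarrow> k \<le> card (I i k)" for k
  proof (induction k)
    case 0 show ?case by simp
  next
    case (Suc k)
    show ?case
    proof
      assume h: "\<forall>k'<Suc k. J k' \<noteq> {}"
      then have ih: "k \<le> card (I i k)" using Suc by auto
      have "\<forall>k'\<le>k. Jset X y (I i k') (W i k') (b i k') \<noteq> {}" using h unfolding J_def by auto
      from bspec[OF step3 i, THEN spec[of _ k], THEN mp, OF this] obtain d Jh where d0: "0 < d"
        "Jh \<subseteq> Jset X y (I i k) (W i k) (b i k)" "card Jh = d" "I i (Suc k) = I i k \<union> Jh"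
        by blast
      then have d: "0 < d" "Jh \<subseteq> J k" "card Jh = d" "I i (Suc k) = I i k \<union> Jh"
        unfolding J_def by auto
      have "Jh \<inter> I i k = {}" using d(2) disj[of k] by blast
      then have "card (I i (Suc k)) = card (I i k) + card Jh"
        using d(4) by (simp add: card_Un_disjoint inf_commute)
      then show "Suc k \<le> card (I i (Suc k))" using ih d by simp
    qed
  qed
  have ex: "\<exists>k. J k = {}"
  proof (rule ccontr)
    assume "\<not> (\<exists>k. J k = {})"
    then have all: "\<forall>k. J k \<noteq> {}" by blast
    then have "CARD('n) \<le> card (I i CARD('n))" using grow[of "CARD('n)"] by blast
    then have "I i CARD('n) = UNIV" using card_seteq[OF finite subset_UNIV, of "I i CARD('n)"] by simp
    then have "J CARD('n) = {}" unfolding J_def Jset_def by auto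
    with all show False by blast
  qed
  define kb where "kb = (LEAST k. J k = {})"
  have kbJ: "J kb = {}" unfolding kb_def by (rule LeastI_ex[OF ex])
  have kbmin: "\<forall>k<kb. J k \<noteq> {}"
  proof (intro allI impI)
    fix k assume "k < kb" then show "J k \<noteq> {}" unfolding kb_def by (rule not_less_Least)
  qed
  have kbn: "kb \<le> CARD('n)"
  proof (rule ccontr)
    assume "\<not> kb \<le> CARD('n)"
    then have "\<forall>k'<CARD('n). J k' \<noteq> {}" "J CARD('n) \<noteq> {}" using kbmin by auto
    then have "CARD('n) \<le> card (I i CARD('n))" using grow[of "CARD('n)"] by blast
    then have "I i CARD('n) = UNIV" using card_seteq[OF finite subset_UNIV, of "I i CARD('n)"] by simp
    then have "J CARD('n) = {}" unfolding J_def Jset_def by auto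
    with \<open>J CARD('n) \<noteq> {}\<close> show False by blast
  qed
  have kbmin': "\<forall>k'<kb. Jset X y (I i k') (W i k') (b i k') \<noteq> {}" using kbmin unfolding J_def by simp
  from bspec[OF step1 i, THEN spec[of _ kb], THEN mp, OF kbmin'] obtain dW db dv dU dlam dLam where E: "err_bound eps dW db dv dU dlam dLam"
    and R: "red_KKT X y tau (I i kb) (C i) (W i kb) (b i kb) (v i kb) (U i kb) (lam i kb) (Lam i kb)
             dW db dv dU dlam dLam"
    by blast
  have F: "full_KKT X y tau (C i) (W i kb) (b i kb)
                (ext_v X y (I i kb) (W i kb) (b i kb) (v i kb)) (U i kb)
                (ext_lam X y (I i kb) (C i) (W i kb) (b i kb) (lam i kb)) (Lam i kb)
                dW db dv dU dlam dLam"
    by (rule full_from_red[OF R _ Cpos]) (use kbJ in \<open>simp add: J_def\<close>)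
  show "\<exists>kb. kb \<le> CARD('n) \<and>
           Jset X y (I i kb) (W i kb) (b i kb) = {} \<and>
           (\<forall>k<kb. Jset X y (I i k) (W i k) (b i k) \<noteq> {}) \<and>
           (\<exists>dW db dv dU dlam dLam. err_bound eps dW db dv dU dlam dLam \<and>
              full_KKT X y tau (C i) (W i kb) (b i kb)
                (ext_v X y (I i kb) (W i kb) (b i kb) (v i kb)) (U i kb)
                (ext_lam X y (I i kb) (C i) (W i kb) (b i kb) (lam i kb)) (Lam i kb)
                dW db dv dU dlam dLam)"
  proof (intro exI[of _ kb] conjI)
    show "kb \<le> CARD('n)" by (rule kbn)
    show "Jset X y (I i kb) (W i kb) (b i kb) = {}" using kbJ unfolding J_def .
    show "\<forall>k<kb. Jset X y (I i k) (W i k) (b i k) \<noteq> {}" by (rule kbmin')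
    show "\<exists>dW db dv dU dlam dLam. err_bound eps dW db dv dU dlam dLam \<and>
              full_KKT X y tau (C i) (W i kb) (b i kb)
                (ext_v X y (I i kb) (W i kb) (b i kb) (v i kb)) (U i kb)
                (ext_lam X y (I i kb) (C i) (W i kb) (b i kb) (lam i kb)) (Lam i kb)
                dW db dv dU dlam dLam" using E F by blast
  qed
qed

end
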